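(* Let $k \ge 1$ and let $P_{2k}$ be the uniform distribution on $2k$ equally spaced points of the unit circle $\mathbb{S}^1$, equipped with the arc length distance $d$. Then for each of these $2k$ points $x$, $D(x; P_{2k}) = -1 + \frac{1}{k} - \frac{1}{4 k^2} + \sum_{j = 1}^{k} \frac{1}{j^2}$.
   Context: Define $h: \mathcal{X}^3 \to \mathbb{R}$ by $h(x_1, x_2, x_3) := \mathbb{I}( x_3 \notin \{x_1, x_2\} ) \dfrac{ d^2(x_1, x_3) + d^2(x_2, x_3) - d^2(x_1, x_2) }{d(x_1, x_3)\, d(x_2, x_3) }$, where $h := 0$ when $x_3 \in \{x_1,x_2\}$. The metric spatial depth of $\mu \in \mathcal{X}$ with respect to a probability distribution $P_X$ on $\mathcal{X}$ is $D(\mu; P_X) := 1 - \frac{1}{2} \mathrm{E} \{ h(X_1, X_2, \mu) \}$, where $X_1, X_2 \sim P_X$ are independent. *)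

theory Defs
  imports "HOL-Probability.Probability"
begin

definition msd_h :: "('a \<Rightarrow> 'a \<Rightarrow> real) \<Rightarrow> 'a \<Rightarrow> 'a \<Rightarrow> 'a \<Rightarrow> real" where
  "msd_h d x1 x2 x3 =
     (if x3 \<in> {x1, x2} then 0
      else (d x1 x3 ^ 2 + d x2 x3 ^ 2 - d x1 x2 ^ 2) / (d x1 x3 * d x2 x3))"

definition metric_spatial_depth :: "('a \<Rightarrow> 'a \<Rightarrow> real) \<Rightarrow> 'a \<Rightarrow> 'a pmf \<Rightarrow> real" where
  "metric_spatial_depth d mu P =
     1 - 1/2 * measure_pmf.expectation (pair_pmf P P) (\<lambda>(x1, x2). msd_h d x1 x2 mu)"

text \<open>Unit circle as unit complex numbers; arc length (geodesic) distance.\<close>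
definition arc_dist :: "complex \<Rightarrow> complex \<Rightarrow> real" where
  "arc_dist z w = arccos (Re (z * cnj w))"

definition circle_pt :: "nat \<Rightarrow> nat \<Rightarrow> complex" where
  "circle_pt k j = cis (pi * real j / real k)"

definition P_circ :: "nat \<Rightarrow> complex pmf" where
  "P_circ k = pmf_of_set (circle_pt k ` {0..<2*k})"

end

theory Submission
  imports Defs
begin

definition wd :: "nat \<Rightarrow> nat \<Rightarrow> nat \<Rightarrow> nat" where
  "wd k a b = (let r = (if a \<le> b then b - a else a - b) in if r \<le> k then r else 2*k - r)"

lemma arccos_cos_nat:
  fixes k r :: nat
  assumes "k \<ge> 1" "r < 2*k"
  shows "arccos (cos (pi * real r / real k)) = pi / real k * real (if r \<le> k then r else 2*k - r)"
proof (cases "r \<le> k")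
  case True
  have "0 \<le> pi * real r / real k" by simp
  moreover have "pi * real r / real k \<le> pi" using True assms
    by (simp add: divide_le_eq_1 mult_le_cancel_left1 divide_simps)
  ultimately show ?thesis using True by (simp add: arccos_cos)
next
  case False
  have e: "cos (pi * real r / real k) = cos (pi * real (2*k - r) / real k)"
  proof -
    have "pi * real (2*k - r) / real k = 2*pi - pi * real r / real k"
      using False assms by (simp add: of_nat_diff field_simps)
    then show ?thesis by (simp add: cos_diff)
  qed
  have "0 \<le> pi * real (2*k-r) / real k" by simp
  moreover have "pi * real (2*k-r) / real k \<le> pi" using False assms
    by (simp add: divide_simps)
  ultimately show ?thesis using False e by (simp add: arccos_cos)
qed

lemma dist_cp:
  "arc_dist (circle_pt k a) (circle_pt k b) = arccos (cos (pi * (real a - real b) / real k))"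
  unfolding arc_dist_def circle_pt_def
  by (simp add: cis_cnj cis_mult diff_divide_distrib right_diff_distrib)

lemma dist_wd:
  fixes k a b :: nat
  assumes "k \<ge> 1" "a < b + 2*k" "b < a + 2*k"
  shows "arc_dist (circle_pt k a) (circle_pt k b) = pi / real k * real (wd k a b)"
proof (cases "a \<le> b")
  case True
  have "cos (pi * (real a - real b) / real k) = cos (pi * real (b - a) / real k)"
    using True by (metis cos_minus minus_diff_eq of_nat_diff mult_minus_right minus_divide_left)
  then show ?thesis using True assms arccos_cos_nat[of k "b-a"] by (simp add: dist_cp wd_def)
next
  case False
  have "cos (pi * (real a - real b) / real k) = cos (pi * real (a - b) / real k)"
    using False by (simp add: of_nat_diff)
  then show ?thesis using False assms arccos_cos_nat[of k "a-b"] by (simp add: dist_cp wd_def)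
qed


lemma cp_mod:
  assumes "k \<ge> 1"
  shows "circle_pt k (n mod (2*k)) = circle_pt k n"
proof -
  define q where "q = n div (2*k)"
  define r where "r = n mod (2*k)"
  have n: "n = 2*k*q + r" unfolding q_def r_def by simp
  have "pi * real n / real k = 2 * pi * real q + pi * real r / real k"
    using assms by (simp add: n field_simps)
  hence "circle_pt k n = cis (2 * pi * real q + pi * real r / real k)"
    by (simp add: circle_pt_def)
  also have "\<dots> = cis (2 * pi * real q) * cis (pi * real r / real k)"
    by (rule cis_mult[symmetric])
  also have "cis (2 * pi * real q) = 1" by (rule cis_multiple_2pi) simp
  also have "1 * cis (pi * real r / real k) = circle_pt k r" by (simp add: circle_pt_def)
  finally show ?thesis by (simp add: r_def)
qed

lemma wd_zero:
  assumes "wd k a b = 0" "a < b + 2*k" "b < a + 2*k"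
  shows "a = b"
  using assms unfolding wd_def Let_def by (auto split: if_splits)

lemma cp_inj:
  fixes k a b :: nat
  assumes "k \<ge> 1" "a < b + 2*k" "b < a + 2*k" "circle_pt k a = circle_pt k b"
  shows "a = b"
proof -
  have "arc_dist (circle_pt k a) (circle_pt k b) = 0"
    using assms(4) dist_cp[of k b b] by simp
  hence "pi / real k * real (wd k a b) = 0" using dist_wd[OF assms(1-3)] by simp
  hence "wd k a b = 0" using assms(1) by simp
  thus ?thesis using wd_zero assms by blast
qed

lemma wd_shift: "wd k (a + j) (b + j) = wd k a b"
  unfolding wd_def Let_def by auto

definition F :: "nat \<Rightarrow> nat \<Rightarrow> nat \<Rightarrow> real" where
  "F k s t = (if s = 0 \<or> t = 0 then 0 else
     (real (wd k s 0)^2 + real (wd k t 0)^2 - real (wd k s t)^2) / (real (wd k s 0) * real (wd k t 0)))"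

lemma set_eq:
  assumes "k \<ge> 1"
  shows "circle_pt k ` {0..<2*k} = (\<lambda>s. circle_pt k (s+j)) ` {0..<2*k}"
    and "inj_on (\<lambda>s. circle_pt k (s+j)) {0..<2*k}"
proof -
  show inj: "inj_on (\<lambda>s. circle_pt k (s+j)) {0..<2*k}"
  proof (rule inj_onI)
    fix s t assume "s \<in> {0..<2*k}" "t \<in> {0..<2*k}" "circle_pt k (s+j) = circle_pt k (t+j)"
    then show "s = t" using cp_inj[OF assms, of "s+j" "t+j"] by auto
  qed
  have sub: "(\<lambda>s. circle_pt k (s+j)) ` {0..<2*k} \<subseteq> circle_pt k ` {0..<2*k}"
  proof
    fix x assume "x \<in> (\<lambda>s. circle_pt k (s+j)) ` {0..<2*k}"
    then obtain s where "x = circle_pt k (s+j)" by auto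
    hence "x = circle_pt k ((s+j) mod (2*k))" using cp_mod[OF assms] by simp
    moreover have "(s+j) mod (2*k) < 2*k" using assms by simp
    ultimately show "x \<in> circle_pt k ` {0..<2*k}" by auto
  qed
  have c1: "card ((\<lambda>s. circle_pt k (s+j)) ` {0..<2*k}) = 2*k"
    using card_image[OF inj] by simp
  have c2: "card (circle_pt k ` {0..<2*k}) \<le> 2*k"
    using card_image_le[of "{0..<2*k}" "circle_pt k"] by simp
  show "circle_pt k ` {0..<2*k} = (\<lambda>s. circle_pt k (s+j)) ` {0..<2*k}"
    using card_subset_eq[OF _ sub] c1 c2 card_mono[OF _ sub] by fastforce
qed

lemma pointwise:
  fixes k j s t :: nat
  assumes "k \<ge> 1" "s < 2*k" "t < 2*k"
  shows "msd_h arc_dist (circle_pt k (s+j)) (circle_pt k (t+j)) (circle_pt k (0+j)) = F k s t"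
proof -
  let ?p = "\<lambda>s. circle_pt k (s+j)"
  have c: "?p 0 \<in> {?p s, ?p t} \<longleftrightarrow> s = 0 \<or> t = 0"
    using cp_inj[OF assms(1), of j "s+j"] cp_inj[OF assms(1), of j "t+j"] assms by auto
  have d: "arc_dist (?p a) (?p b) = pi / real k * real (wd k a b)" if "a < 2*k" "b < 2*k" for a b
    using dist_wd[OF assms(1), of "a+j" "b+j"] wd_shift[of k a j b] that by simp
  show ?thesis
  proof (cases "s = 0 \<or> t = 0")
    case True then show ?thesis using c by (simp add: msd_h_def F_def)
  next
    case False
    have ne: "pi / real k \<noteq> 0" using assms by simp
    define A where "A = real (wd k s 0)"
    define B where "B = real (wd k t 0)"
    define C where "C = real (wd k s t)"
    define cc where "cc = pi / real k"
    have "A \<noteq> 0" unfolding A_def using wd_zero[of k s 0] False assms by auto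
    moreover have "B \<noteq> 0" unfolding B_def using wd_zero[of k t 0] False assms by auto
    have m: "msd_h arc_dist (?p s) (?p t) (?p 0) = ((cc*A)^2 + (cc*B)^2 - (cc*C)^2)/((cc*A)*(cc*B))"
      unfolding msd_h_def using c False d[OF assms(2), of 0] d[OF assms(3), of 0] d[OF assms(2,3)] assms
      unfolding A_def B_def C_def cc_def by simp
    have f: "F k s t = (A^2+B^2-C^2)/(A*B)" using False unfolding F_def A_def B_def C_def by simp
    have n1: "(cc*A)^2 + (cc*B)^2 - (cc*C)^2 = cc^2 * (A^2+B^2-C^2)" by (simp add: algebra_simps power_mult_distrib)
    have n2: "(cc*A)*(cc*B) = cc^2*(A*B)" by (simp add: power2_eq_square)
    have "cc \<noteq> 0" using ne cc_def by simp
    then show ?thesis unfolding m f n1 n2 by simp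
  qed
qed


lemma reduce:
  fixes k j :: nat
  assumes k: "k \<ge> 1" and j: "j < 2*k"
  shows "metric_spatial_depth arc_dist (circle_pt k j) (P_circ k)
       = 1 - 1/2 * ((\<Sum>s<2*k. \<Sum>t<2*k. F k s t) / (2 * real k)^2)"
proof -
  define p where "p = (\<lambda>s. circle_pt k (s+j))"
  define S where "S = circle_pt k ` {0..<2*k}"
  have Sp: "S = p ` {0..<2*k}" and inj: "inj_on p {0..<2*k}"
    using set_eq[OF k, of j] unfolding S_def p_def by auto
  have fin: "finite S" unfolding S_def by simp
  have ne: "S \<noteq> {}" unfolding S_def using k by auto
  have cS: "card S = 2*k" unfolding Sp using card_image[OF inj] by simp
  define f where "f = (\<lambda>(x1, x2). msd_h arc_dist x1 x2 (circle_pt k j))"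
  have P: "P_circ k = pmf_of_set S" unfolding P_circ_def S_def by simp
  have "measure_pmf.expectation (pair_pmf (P_circ k) (P_circ k)) f
        = (\<Sum>a\<in>S\<times>S. f a * pmf (pair_pmf (pmf_of_set S) (pmf_of_set S)) a)"
    unfolding P by (rule integral_measure_pmf_real) (use fin ne in auto)
  also have "\<dots> = (\<Sum>a\<in>S\<times>S. f a / (real (card S))^2)"
    by (rule sum.cong) (auto simp: pmf_pair fin ne power2_eq_square)
  also have "\<dots> = (\<Sum>a\<in>S\<times>S. f a) / (real (card S))^2"
    by (simp add: sum_divide_distrib)
  also have "(\<Sum>a\<in>S\<times>S. f a) = (\<Sum>x\<in>S. \<Sum>y\<in>S. msd_h arc_dist x y (circle_pt k j))"
    unfolding f_def by (simp add: sum.cartesian_product)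
  also have "\<dots> = (\<Sum>s<2*k. \<Sum>t<2*k. msd_h arc_dist (p s) (p t) (p 0))"
    using inj unfolding Sp atLeast0LessThan by (simp add: sum.reindex p_def)
  also have "\<dots> = (\<Sum>s<2*k. \<Sum>t<2*k. F k s t)"
    by (rule sum.cong, simp, rule sum.cong, simp) (use pointwise[OF k] in \<open>auto simp: p_def\<close>)
  finally show ?thesis unfolding metric_spatial_depth_def f_def cS by simp
qed


lemma two_help:
  fixes a b c :: real
  assumes "a \<noteq> 0" "b \<noteq> 0" "c = \<bar>a - b\<bar>"
  shows "(a^2 + b^2 - c^2) / (a * b) = 2"
proof -
  have "c^2 = (a-b)^2" using assms(3) by simp
  hence "a^2 + b^2 - c^2 = 2 * (a*b)" by (simp add: power2_eq_square algebra_simps)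
  thus ?thesis using assms by simp
qed

lemma F_two:
  assumes "s \<noteq> 0" "t \<noteq> 0" "wd k s 0 = A" "wd k t 0 = B" "A \<noteq> 0" "B \<noteq> 0"
     "real (wd k s t) = \<bar>real A - real B\<bar>"
  shows "F k s t = 2"
  using assms two_help[of "real A" "real B" "real (wd k s t)"] unfolding F_def by simp

definition G :: "nat \<Rightarrow> nat \<Rightarrow> nat \<Rightarrow> real" where
  "G k u v = -2 + (if k \<le> u + v then 4*k/u + 4*k/v - 4*(real k)^2/(real u * real v) else 0)"

lemma F_G:
  assumes "s \<noteq> 0" "t \<noteq> 0" "wd k s 0 = u" "wd k t 0 = v" "u \<noteq> 0" "v \<noteq> 0"
     "wd k s t = (if k \<le> u + v then 2*k - u - v else u + v)" "u + v \<le> 2*k"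
  shows "F k s t = G k u v"
proof (cases "k \<le> u + v")
  case True
  have "real (wd k s t) = 2 * real k - real u - real v" using assms True by simp
  then show ?thesis using assms True unfolding F_def G_def
    by (simp add: field_simps power2_eq_square)
next
  case False
  then show ?thesis using assms unfolding F_def G_def
    by (simp add: field_simps power2_eq_square)
qed

lemma wd_vals:
  assumes "1 \<le> u" "u < k" "1 \<le> v" "v < k"
  shows "wd k u 0 = u" "wd k (2*k-u) 0 = u" "wd k k 0 = k"
    "wd k u k = k - u" "wd k (2*k-u) k = k - u" "wd k k k = 0"
    "wd k k v = k - v" "wd k k (2*k-v) = k - v"
    "wd k u v = (if u \<le> v then v - u else u - v)"
    "wd k (2*k-u) (2*k-v) = (if u \<le> v then v - u else u - v)"
    "wd k u (2*k-v) = (if k \<le> u + v then 2*k - u - v else u + v)"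
    "wd k (2*k-u) v = (if k \<le> u + v then 2*k - u - v else u + v)"
  using assms unfolding wd_def Let_def by auto

lemma F_vals:
  assumes "1 \<le> u" "u < k" "1 \<le> v" "v < k"
  shows "F k u k = 2" "F k (2*k-u) k = 2" "F k k k = 2" "F k k v = 2" "F k k (2*k-v) = 2"
    "F k u v = 2" "F k (2*k-u) (2*k-v) = 2"
    "F k u (2*k-v) = G k u v" "F k (2*k-u) v = G k u v"
    "F k s 0 = 0" "F k 0 t = 0"
proof -
  note w = wd_vals[OF assms]
  note w1 = wd_vals(1-3)[OF assms] wd_vals(1-3)[OF assms(3,4,1,2)]
  show "F k u k = 2" by (rule F_two[OF _ _ w1(1) w1(3)]) (use assms w in auto)
  show "F k (2*k-u) k = 2" by (rule F_two[OF _ _ w1(2) w1(3)]) (use assms w in auto)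
  show "F k k k = 2" by (rule F_two[OF _ _ w1(3) w1(3)]) (use assms w in auto)
  show "F k k v = 2" by (rule F_two[OF _ _ w1(3) w1(4)]) (use assms w in auto)
  show "F k k (2*k-v) = 2" by (rule F_two[OF _ _ w1(3) w1(5)]) (use assms w in auto)
  show "F k u v = 2" by (rule F_two[OF _ _ w1(1) w1(4)]) (use assms w in auto)
  show "F k (2*k-u) (2*k-v) = 2" by (rule F_two[OF _ _ w1(2) w1(5)]) (use assms w in auto)
  show "F k u (2*k-v) = G k u v" by (rule F_G[OF _ _ w1(1) w1(5)]) (use assms w in auto)
  show "F k (2*k-u) v = G k u v" by (rule F_G[OF _ _ w1(2) w1(4)]) (use assms w in auto)
  show "F k s 0 = 0" "F k 0 t = 0" unfolding F_def by auto
qed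


lemma F_0: "F k s 0 = 0" "F k 0 t = 0" unfolding F_def by auto

lemma F_kk: "k \<ge> 1 \<Longrightarrow> F k k k = 2"
  unfolding F_def wd_def Let_def by (simp add: power2_eq_square)

lemma split2k:
  fixes g :: "nat \<Rightarrow> real"
  assumes "k \<ge> 1"
  shows "(\<Sum>s<2*k. g s) = g 0 + g k + (\<Sum>u\<in>{1..<k}. g u + g (2*k - u))"
proof -
  have e: "{..<2*k} = insert 0 (insert k ({1..<k} \<union> {k+1..<2*k}))" using assms by auto
  have r: "(\<Sum>s\<in>{k+1..<2*k}. g s) = (\<Sum>u\<in>{1..<k}. g (2*k - u))"
    by (rule sum.reindex_bij_witness[where i="\<lambda>u. 2*k - u" and j="\<lambda>s. 2*k - s"]) auto
  have "(\<Sum>s<2*k. g s) = g 0 + (g k + ((\<Sum>u\<in>{1..<k}. g u) + (\<Sum>s\<in>{k+1..<2*k}. g s)))"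
    unfolding e using assms by (subst sum.insert; auto simp: sum.union_disjoint)+
  then show ?thesis using r by (simp add: sum.distrib)
qed

lemma total:
  assumes k: "k \<ge> 1"
  shows "(\<Sum>s<2*k. \<Sum>t<2*k. F k s t) = 4 * (real k)^2 - 2 + 2 * (\<Sum>u\<in>{1..<k}. \<Sum>v\<in>{1..<k}. G k u v)"
proof -
  have inner: "(\<Sum>t<2*k. F k s t) = F k s k + (\<Sum>v\<in>{1..<k}. F k s v + F k s (2*k-v))" for s
    using split2k[OF k, of "F k s"] F_0 by simp
  have "(\<Sum>s<2*k. \<Sum>t<2*k. F k s t) = (\<Sum>s<2*k. F k s k) + (\<Sum>v\<in>{1..<k}. \<Sum>s<2*k. F k s v + F k s (2*k-v))"
    by (simp add: inner sum.distrib sum.swap[of _ "{..<2*k}"])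
  also have "(\<Sum>s<2*k. F k s k) = 2 + 4 * (real k - 1)"
  proof -
    have "(\<Sum>s<2*k. F k s k) = F k 0 k + F k k k + (\<Sum>u\<in>{1..<k}. F k u k + F k (2*k-u) k)"
      by (rule split2k[OF k])
    also have "\<dots> = 0 + 2 + (\<Sum>u\<in>{1..<k}. 4)"
    proof -
      have "(\<Sum>u\<in>{1..<k}. F k u k + F k (2*k-u) k) = (\<Sum>u\<in>{1..<k}. 4)"
        by (rule sum.cong[OF refl]) (use F_vals(1,2)[of _ k 1] in auto)
      then show ?thesis using F_0 F_kk[OF k] by simp
    qed
    finally show ?thesis using k by (simp add: of_nat_diff)
  qed
  also have "(\<Sum>v\<in>{1..<k}. \<Sum>s<2*k. F k s v + F k s (2*k-v))
     = (\<Sum>v\<in>{1..<k}. 4 + (\<Sum>u\<in>{1..<k}. 4 + 2 * G k u v))"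
  proof (rule sum.cong[OF refl])
    fix v assume v: "v \<in> {1..<k}"
    have "(\<Sum>s<2*k. F k s v + F k s (2*k-v)) = (F k 0 v + F k 0 (2*k-v)) + (F k k v + F k k (2*k-v))
       + (\<Sum>u\<in>{1..<k}. (F k u v + F k u (2*k-v)) + (F k (2*k-u) v + F k (2*k-u) (2*k-v)))"
      by (rule split2k[OF k])
    also have "\<dots> = 0 + 4 + (\<Sum>u\<in>{1..<k}. 4 + 2 * G k u v)"
    proof -
      have "(\<Sum>u\<in>{1..<k}. (F k u v + F k u (2*k-v)) + (F k (2*k-u) v + F k (2*k-u) (2*k-v)))
          = (\<Sum>u\<in>{1..<k}. 4 + 2 * G k u v)"
        by (rule sum.cong[OF refl]) (use v F_vals[of _ k v] in auto)
      moreover have "F k 0 v + F k 0 (2*k-v) = 0" by (simp add: F_0)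
      moreover have "F k k v + F k k (2*k-v) = 4" using v F_vals[of 1 k v] k by auto
      ultimately show ?thesis by simp
    qed
    finally show "(\<Sum>s<2*k. F k s v + F k s (2*k-v)) = 4 + (\<Sum>u\<in>{1..<k}. 4 + 2 * G k u v)" by simp
  qed
  also have "(\<Sum>v\<in>{1..<k}. 4 + (\<Sum>u\<in>{1..<k}. 4 + 2 * G k u v))
     = 4 * (real k - 1) + 4 * (real k - 1)^2 + 2 * (\<Sum>u\<in>{1..<k}. \<Sum>v\<in>{1..<k}. G k u v)"
  proof -
    have sw: "(\<Sum>v\<in>{1..<k}. \<Sum>u\<in>{1..<k}. G k u v) = (\<Sum>u\<in>{1..<k}. \<Sum>v\<in>{1..<k}. G k u v)"
      by (rule sum.swap)
    show ?thesis using k sw by (simp add: sum.distrib sum_distrib_left[symmetric] of_nat_diff power2_eq_square algebra_simps)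
  qed
  finally show ?thesis by (simp add: power2_eq_square algebra_simps)
qed


definition H :: "nat \<Rightarrow> real" where "H n = (\<Sum>i\<in>{1..n}. 1 / real i)"
definition H2 :: "nat \<Rightarrow> real" where "H2 n = (\<Sum>i\<in>{1..n}. 1 / (real i)^2)"
definition Y :: "nat \<Rightarrow> real" where
  "Y n = (\<Sum>u\<in>{1..n}. \<Sum>v\<in>{1..n}. if u + v \<le> n then 1 / (real u * real v) else 0)"

lemma H_Suc: "H (Suc n) = H n + 1 / real (Suc n)" unfolding H_def by simp
lemma H2_Suc: "H2 (Suc n) = H2 n + 1 / (real (Suc n))^2" unfolding H2_def by simp

lemma rev_sum: "(\<Sum>u\<in>{1..n}. 1 / real (Suc n - u)) = H n"
proof -
  have "(\<Sum>u\<in>{1..n}. 1 / real (Suc n - u)) = (\<Sum>u\<in>{1..n}. 1 / real (Suc n - (n + 1 - u)))"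
    by (rule sum.atLeastAtMost_rev)
  also have "\<dots> = H n" unfolding H_def by (rule sum.cong) auto
  finally show ?thesis .
qed

lemma anti_diag: "(\<Sum>u\<in>{1..n}. 1 / (real u * real (Suc n - u))) = 2 * H n / real (Suc n)"
proof -
  have "(\<Sum>u\<in>{1..n}. 1 / (real u * real (Suc n - u)))
      = (\<Sum>u\<in>{1..n}. (1 / real u + 1 / real (Suc n - u)) / real (Suc n))"
  proof (rule sum.cong[OF refl])
    fix u assume u: "u \<in> {1..n}"
    have e: "real (Suc n) = real u + real (Suc n - u)" using u by (simp add: of_nat_diff)
    have "real (Suc n - u) \<noteq> 0" "real u \<noteq> 0" using u by auto
    moreover have "1 / (a * b) = (1 / a + 1 / b) / (a + b)" if "a \<noteq> 0" "b \<noteq> 0" "a + b \<noteq> 0" for a b :: real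
    proof -
      have "1/a + 1/b = (a+b)/(a*b)" using that by (simp add: field_simps)
      then show ?thesis using that by simp
    qed
    moreover have "real u + real (Suc n - u) \<noteq> 0" using u by simp
    ultimately show "1 / (real u * real (Suc n - u)) = (1 / real u + 1 / real (Suc n - u)) / real (Suc n)"
      unfolding e by blast
  qed
  also have "\<dots> = ((\<Sum>u\<in>{1..n}. 1 / real u) + (\<Sum>u\<in>{1..n}. 1 / real (Suc n - u))) / real (Suc n)"
    by (simp only: sum_divide_distrib[symmetric] sum.distrib)
  also have "\<dots> = (H n + H n) / real (Suc n)" unfolding rev_sum H_def ..
  finally show ?thesis by simp
qed

lemma Y_formula: "Y n = (H n)^2 - H2 n"
proof (induction n)
  case 0 then show ?case by (simp add: Y_def H_def H2_def)
next
  case (Suc n)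
  have "Y (Suc n) = (\<Sum>u\<in>{1..n}. \<Sum>v\<in>{1..n}. if u + v \<le> Suc n then 1 / (real u * real v) else 0)"
    unfolding Y_def by simp
  also have "\<dots> = (\<Sum>u\<in>{1..n}. \<Sum>v\<in>{1..n}. (if u + v \<le> n then 1 / (real u * real v) else 0)
          + (if v = Suc n - u then 1 / (real u * real v) else 0))"
    by (intro sum.cong refl) auto
  also have "\<dots> = Y n + (\<Sum>u\<in>{1..n}. 1 / (real u * real (Suc n - u)))"
    unfolding Y_def by (simp add: sum.distrib) (intro sum.cong refl, auto)
  also have "\<dots> = (H n)^2 - H2 n + 2 * H n / real (Suc n)" using Suc anti_diag by simp
  also have "\<dots> = (H (Suc n))^2 - H2 (Suc n)"
  proof -
    have "(h + 1/N)^2 - (g + 1/N^2) = h^2 - g + 2*h/N" if "N \<noteq> 0" for h g N :: real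
      using that by (simp add: field_simps power2_eq_square)
    from this[of "real (Suc n)"] show ?thesis unfolding H_Suc H2_Suc by simp
  qed
  finally show ?case .
qed

lemma X_formula:
  "(\<Sum>u\<in>{1..n}. \<Sum>v\<in>{1..n}. if Suc n \<le> u + v then 1 / (real u * real v) else 0) = H2 n"
proof -
  have "(H n)^2 = (\<Sum>u\<in>{1..n}. \<Sum>v\<in>{1..n}. 1 / (real u * real v))"
    unfolding H_def power2_eq_square sum_product by simp
  also have "\<dots> = Y n + (\<Sum>u\<in>{1..n}. \<Sum>v\<in>{1..n}. if Suc n \<le> u + v then 1 / (real u * real v) else 0)"
    unfolding Y_def sum.distrib[symmetric] by (intro sum.cong refl) auto
  finally show ?thesis using Y_formula by simp
qed

lemma count_cond:
  assumes "1 \<le> u" "u < k"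
  shows "(\<Sum>v\<in>{1..<k}. if k \<le> u + v then c else 0) = real u * c"
proof -
  have eq: "{v\<in>{1..<k}. k \<le> u + v} = {k-u..<k}" using assms by auto
  have "(\<Sum>v\<in>{1..<k}. if k \<le> u + v then c else 0) = (\<Sum>v\<in>{v\<in>{1..<k}. k \<le> u + v}. c)"
    by (rule sum.inter_filter[symmetric]) simp
  also have "\<dots> = (\<Sum>v\<in>{k-u..<k}. c)" unfolding eq ..
  finally show ?thesis using assms by simp
qed

lemma G_sum:
  assumes k: "k \<ge> 1"
  shows "(\<Sum>u\<in>{1..<k}. \<Sum>v\<in>{1..<k}. G k u v)
     = -2 * (real k - 1)^2 + 8 * real k * (real k - 1) - 4 * (real k)^2 * H2 (k - 1)"
proof -
  define c where "c = (\<lambda>u v. if k \<le> u + v then (1::real) else 0)"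
  have pw: "G k u v = -2 + 4 * real k * (c u v / real u) + 4 * real k * (c v u / real v)
              - 4 * (real k)^2 * (c u v / (real u * real v))" for u v
    unfolding G_def c_def by (auto simp: add.commute)
  have s1: "(\<Sum>u\<in>{1..<k}. \<Sum>v\<in>{1..<k}. c u v / real u) = real k - 1"
  proof -
    have "(\<Sum>u\<in>{1..<k}. \<Sum>v\<in>{1..<k}. c u v / real u) = (\<Sum>u\<in>{1..<k}. 1)"
    proof (rule sum.cong[OF refl])
      fix u assume u: "u \<in> {1..<k}"
      have "(\<Sum>v\<in>{1..<k}. c u v / real u) = (\<Sum>v\<in>{1..<k}. if k \<le> u + v then 1 / real u else 0)"
        unfolding c_def by (intro sum.cong refl) auto
      also have "\<dots> = 1" using count_cond[of u k "1 / real u"] u by auto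
      finally show "(\<Sum>v\<in>{1..<k}. c u v / real u) = 1" .
    qed
    then show ?thesis using k by (simp add: of_nat_diff)
  qed
  have s2: "(\<Sum>u\<in>{1..<k}. \<Sum>v\<in>{1..<k}. c v u / real v) = real k - 1"
    using s1 sum.swap[of "\<lambda>u v. c v u / real v" "{1..<k}" "{1..<k}"] by simp
  have s3: "(\<Sum>u\<in>{1..<k}. \<Sum>v\<in>{1..<k}. c u v / (real u * real v)) = H2 (k - 1)"
  proof -
    obtain n where n: "k = Suc n" using k by (cases k) auto
    have "{1..<k} = {1..n}" using n by auto
    have "(\<Sum>u\<in>{1..<k}. \<Sum>v\<in>{1..<k}. c u v / (real u * real v))
       = (\<Sum>u\<in>{1..n}. \<Sum>v\<in>{1..n}. if Suc n \<le> u + v then 1 / (real u * real v) else 0)"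
      unfolding \<open>{1..<k} = {1..n}\<close> by (intro sum.cong refl) (simp add: c_def n)
    then show ?thesis using X_formula[of n] n by simp
  qed
  have "(\<Sum>u\<in>{1..<k}. \<Sum>v\<in>{1..<k}. G k u v)
     = (\<Sum>u\<in>{1..<k}. \<Sum>v\<in>{1..<k}. -2) + 4 * real k * (\<Sum>u\<in>{1..<k}. \<Sum>v\<in>{1..<k}. c u v / real u)
       + 4 * real k * (\<Sum>u\<in>{1..<k}. \<Sum>v\<in>{1..<k}. c v u / real v)
       - 4 * (real k)^2 * (\<Sum>u\<in>{1..<k}. \<Sum>v\<in>{1..<k}. c u v / (real u * real v))"
    unfolding pw by (simp add: sum.distrib sum_subtractf sum_distrib_left; simp add: algebra_simps)
  also have "\<dots> = -2 * (real k - 1)^2 + 8 * real k * (real k - 1) - 4 * (real k)^2 * H2 (k - 1)"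
  proof -
    have rk: "real (k - 1) = real k - 1" using k by (simp add: of_nat_diff)
    have rk': "real (k - Suc 0) = real k - 1" using rk by simp
    show ?thesis unfolding s1 s2 s3 rk by (simp add: rk' power2_eq_square algebra_simps)
  qed
  finally show ?thesis .
qed


theorem mainTheorem13:
  fixes k j :: nat
  assumes "k \<ge> 1" and "j < 2 * k"
  shows "metric_spatial_depth arc_dist (circle_pt k j) (P_circ k)
         = -1 + 1 / real k - 1 / (4 * (real k)^2) + (\<Sum>i = 1..k. 1 / (real i)^2)"
proof -
  have k: "k \<ge> 1" using assms by simp
  have h2: "H2 (k - 1) = H2 k - 1 / (real k)^2"
    using k H2_Suc[of "k - 1"] by simp
  have hs: "(\<Sum>i = 1..k. 1 / (real i)^2) = H2 k" unfolding H2_def ..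
  have kp: "real k \<noteq> 0" using k by simp
  show ?thesis
    unfolding reduce[OF k assms(2)] total[OF k] G_sum[OF k] h2 hs
    using kp by (simp add: field_simps power2_eq_square)
qed

end
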